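(* Let $I\subseteq\mathbb{R}$ be an interval, $p\in\mathbb{N}$, $\mathbf{d}=(d_1,\dots,d_p)\in\mathbb{N}^p$, $\alpha\in\mathbb{N}_p^{\mathbf{d}}$, and let $\mathbf{M}=(M_1,\dots,M_p)$ be a $\mathbf{d}$-averaging mapping on $I$. Assume that the root graph $\mathcal{R}(G_\alpha)$ is ergodic and each $M_i$ is continuous and strict. Let $K_\alpha\colon I^p\to I$ be the mean such that $\mathbf{M}_\alpha^n\to\mathbf{K}_\alpha:=(K_\alpha,\dots,K_\alpha)$ pointwise on $I^p$ as $n\to\infty$ (which exists under these hypotheses). Then: (a) $\mathbf{K}_\alpha=\mathbf{K}_\alpha\circ\mathbf{M}_\alpha$; (b) if $M_1,\dots,M_p$ are nondecreasing in each variable, then so is $K_\alpha$; (c) if $I=(0,+\infty)$ and $M_1,\dots,M_p$ are positively homogeneous, then every iterate $\mathbf{M}_\alpha^n$ and $K_\alpha$ are positively homogeneous.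
   Context: A $k$-variable mean on an interval $I$ is a function $M\colon I^k\to I$ with $\min(x)\le M(x)\le\max(x)$ for all $x\in I^k$; it is strict if both inequalities are strict for every nonconstant $x$. Notation: $\mathbb{N}_p=\{1,\dots,p\}$, $\mathbb{N}_p^{\mathbf{d}}=\mathbb{N}_p^{d_1}\times\dots\times\mathbb{N}_p^{d_p}$. A $\mathbf{d}$-averaging mapping on $I$ is a sequence $(M_1,\dots,M_p)$ where each $M_i$ is a $d_i$-variable mean on $I$. For $\alpha=(\alpha_1,\dots,\alpha_p)\in\mathbb{N}_p^{\mathbf{d}}$, $\alpha_i=(\alpha_{i,1},\dots,\alpha_{i,d_i})$, define $\mathbf{M}_\alpha\colon I^p\to I^p$ by $\mathbf{M}_\alpha(x)=\big(M_i(x_{\alpha_{i,1}},\dots,x_{\alpha_{i,d_i}})\big)_{i=1}^p$; $\mathbf{M}_\alpha^n$ is its $n$-th iterate. The $\alpha$-incidence graph is $G_\alpha=(\mathbb{N}_p,E_\alpha)$, $E_\alpha=\{(\alpha_{i,j},i): i\in\mathbb{N}_p, j\in\mathbb{N}_{d_i}\}$. A digraph is ergodic if it is nonempty, irreducible (walks exist between any two vertices) and aperiodic (no integer $k>1$ divides the length of every cycle). The root $R(G)$ of a digraph $G$ is the union of the strongly connected components that receive no edge from another component; the root graph $\mathcal{R}(G)$ is the subgraph induced by $R(G)$. Positive homogeneity of $F$ on $(0,\infty)^k$ means $F(tx)=tF(x)$ for all $t>0$. *)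

theory Defs
  imports "HOL-Analysis.Analysis"
begin

(* Conventions: indices are 0-based. A point of I^k is encoded as a function
   x :: nat => real with x j \<in> I for j < k and x j = 0 for j >= k. *)

definition cube :: "real set \<Rightarrow> nat \<Rightarrow> (nat \<Rightarrow> real) set" where
  "cube I k = {x. (\<forall>j<k. x j \<in> I) \<and> (\<forall>j\<ge>k. x j = 0)}"

definition is_mean :: "real set \<Rightarrow> nat \<Rightarrow> ((nat \<Rightarrow> real) \<Rightarrow> real) \<Rightarrow> bool" where
  "is_mean I k M \<longleftrightarrow> (\<forall>x\<in>cube I k.
      Min (x ` {..<k}) \<le> M x \<and> M x \<le> Max (x ` {..<k}) \<and> M x \<in> I)"

definition strict_mean :: "real set \<Rightarrow> nat \<Rightarrow> ((nat \<Rightarrow> real) \<Rightarrow> real) \<Rightarrow> bool" where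
  "strict_mean I k M \<longleftrightarrow> is_mean I k M \<and> (\<forall>x\<in>cube I k.
      (\<exists>j1<k. \<exists>j2<k. x j1 \<noteq> x j2) \<longrightarrow>
        Min (x ` {..<k}) < M x \<and> M x < Max (x ` {..<k}))"

definition averaging_mapping ::
  "real set \<Rightarrow> nat \<Rightarrow> (nat \<Rightarrow> nat) \<Rightarrow> (nat \<Rightarrow> (nat \<Rightarrow> real) \<Rightarrow> real) \<Rightarrow> bool" where
  "averaging_mapping I p d M \<longleftrightarrow> (\<forall>i<p. is_mean I (d i) (M i))"

definition admissible_alpha :: "nat \<Rightarrow> (nat \<Rightarrow> nat) \<Rightarrow> (nat \<Rightarrow> nat \<Rightarrow> nat) \<Rightarrow> bool" where
  "admissible_alpha p d \<alpha> \<longleftrightarrow> (\<forall>i<p. \<forall>j<d i. \<alpha> i j < p)"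

definition M_alpha ::
  "nat \<Rightarrow> (nat \<Rightarrow> nat) \<Rightarrow> (nat \<Rightarrow> nat \<Rightarrow> nat) \<Rightarrow> (nat \<Rightarrow> (nat \<Rightarrow> real) \<Rightarrow> real)
     \<Rightarrow> (nat \<Rightarrow> real) \<Rightarrow> (nat \<Rightarrow> real)" where
  "M_alpha p d \<alpha> M x = (\<lambda>i. if i < p then M i (\<lambda>j. if j < d i then x (\<alpha> i j) else 0) else 0)"

(* incidence graph G_alpha: vertices {..<p}, edges (alpha i j, i) *)
definition incidence_edges :: "nat \<Rightarrow> (nat \<Rightarrow> nat) \<Rightarrow> (nat \<Rightarrow> nat \<Rightarrow> nat) \<Rightarrow> (nat \<times> nat) set" where
  "incidence_edges p d \<alpha> = {(\<alpha> i j, i) | i j. i < p \<and> j < d i}"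

(* root of a digraph (V,E): union of strongly connected components receiving
   no edge from another component, i.e. vertices v such that every vertex
   reaching v is reachable from v *)
definition graph_root :: "'a set \<Rightarrow> ('a \<times> 'a) set \<Rightarrow> 'a set" where
  "graph_root V E = {v\<in>V. \<forall>u\<in>V. (u, v) \<in> E\<^sup>* \<longrightarrow> (v, u) \<in> E\<^sup>*}"

definition induced_edges :: "'a set \<Rightarrow> ('a \<times> 'a) set \<Rightarrow> ('a \<times> 'a) set" where
  "induced_edges V E = E \<inter> (V \<times> V)"

definition irreducible_graph :: "'a set \<Rightarrow> ('a \<times> 'a) set \<Rightarrow> bool" where
  "irreducible_graph V E \<longleftrightarrow> (\<forall>u\<in>V. \<forall>v\<in>V. (u, v) \<in> E\<^sup>*)"

definition cycle_lengths :: "'a set \<Rightarrow> ('a \<times> 'a) set \<Rightarrow> nat set" where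
  "cycle_lengths V E = {n. n > 0 \<and> (\<exists>v\<in>V. (v, v) \<in> E ^^ n)}"

definition aperiodic_graph :: "'a set \<Rightarrow> ('a \<times> 'a) set \<Rightarrow> bool" where
  "aperiodic_graph V E \<longleftrightarrow> \<not> (\<exists>k::nat. k > 1 \<and> (\<forall>n\<in>cycle_lengths V E. k dvd n))"

definition ergodic_graph :: "'a set \<Rightarrow> ('a \<times> 'a) set \<Rightarrow> bool" where
  "ergodic_graph V E \<longleftrightarrow> V \<noteq> {} \<and> E \<subseteq> V \<times> V \<and> irreducible_graph V E \<and> aperiodic_graph V E"

definition root_graph_ergodic :: "'a set \<Rightarrow> ('a \<times> 'a) set \<Rightarrow> bool" where
  "root_graph_ergodic V E \<longleftrightarrow>
     ergodic_graph (graph_root V E) (induced_edges (graph_root V E) E)"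

definition nondecreasing_mean :: "real set \<Rightarrow> nat \<Rightarrow> ((nat \<Rightarrow> real) \<Rightarrow> real) \<Rightarrow> bool" where
  "nondecreasing_mean I k M \<longleftrightarrow>
     (\<forall>x\<in>cube I k. \<forall>y\<in>cube I k. (\<forall>j<k. x j \<le> y j) \<longrightarrow> M x \<le> M y)"

definition pos_homogeneous :: "nat \<Rightarrow> ((nat \<Rightarrow> real) \<Rightarrow> real) \<Rightarrow> bool" where
  "pos_homogeneous k F \<longleftrightarrow>
     (\<forall>x\<in>cube {0<..} k. \<forall>t>0. F (\<lambda>j. t * x j) = t * F x)"

end

theory Submission
  imports Defs
begin


lemma arg_cube:
  assumes "admissible_alpha p d \<alpha>" "x \<in> cube I p" "i < p"
  shows "(\<lambda>j. if j < d i then x (\<alpha> i j) else 0) \<in> cube I (d i)"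
  using assms unfolding cube_def admissible_alpha_def by auto

lemma Ma_cube:
  assumes "admissible_alpha p d \<alpha>" "averaging_mapping I p d M" "x \<in> cube I p"
  shows "M_alpha p d \<alpha> M x \<in> cube I p"
proof -
  have "\<forall>i<p. M_alpha p d \<alpha> M x i \<in> I"
  proof (intro allI impI)
    fix i assume i: "i < p"
    have "is_mean I (d i) (M i)" using assms(2) i unfolding averaging_mapping_def by auto
    then show "M_alpha p d \<alpha> M x i \<in> I"
      using arg_cube[OF assms(1) assms(3) i] i unfolding is_mean_def M_alpha_def by auto
  qed
  then show ?thesis unfolding cube_def M_alpha_def by auto
qed

lemma iter_cube:
  assumes "admissible_alpha p d \<alpha>" "averaging_mapping I p d M" "x \<in> cube I p"
  shows "((M_alpha p d \<alpha> M) ^^ n) x \<in> cube I p"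
  by (induction n) (auto simp: assms Ma_cube)

lemma Ma_mono:
  assumes "admissible_alpha p d \<alpha>" "\<forall>i<p. nondecreasing_mean I (d i) (M i)"
    "x \<in> cube I p" "y \<in> cube I p" "\<forall>j<p. x j \<le> y j"
  shows "\<forall>j<p. M_alpha p d \<alpha> M x j \<le> M_alpha p d \<alpha> M y j"
proof (intro allI impI)
  fix i assume i: "i < p"
  have nd: "nondecreasing_mean I (d i) (M i)" using assms(2) i by auto
  have "\<forall>j<d i. (if j < d i then x (\<alpha> i j) else 0) \<le> (if j < d i then y (\<alpha> i j) else 0)"
    using assms(1,5) i unfolding admissible_alpha_def by auto
  then show "M_alpha p d \<alpha> M x i \<le> M_alpha p d \<alpha> M y i"
    using nd arg_cube[OF assms(1) assms(3) i] arg_cube[OF assms(1) assms(4) i] i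
    unfolding nondecreasing_mean_def M_alpha_def by auto
qed

lemma iter_mono:
  assumes "admissible_alpha p d \<alpha>" "averaging_mapping I p d M"
    "\<forall>i<p. nondecreasing_mean I (d i) (M i)"
    "x \<in> cube I p" "y \<in> cube I p" "\<forall>j<p. x j \<le> y j"
  shows "\<forall>j<p. ((M_alpha p d \<alpha> M) ^^ n) x j \<le> ((M_alpha p d \<alpha> M) ^^ n) y j"
proof (induction n)
  case 0 then show ?case using assms by simp
next
  case (Suc n)
  show ?case using Ma_mono[OF assms(1,3) iter_cube[OF assms(1,2,4)] iter_cube[OF assms(1,2,5)] Suc]
    by simp
qed

lemma scale_cube:
  assumes "x \<in> cube {0<..} p" "(t::real) > 0"
  shows "(\<lambda>j. t * x j) \<in> cube {0<..} p"
  using assms unfolding cube_def by auto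

lemma Ma_hom:
  assumes "admissible_alpha p d \<alpha>" "\<forall>i<p. pos_homogeneous (d i) (M i)"
    "x \<in> cube {0<..} p" "(t::real) > 0"
  shows "M_alpha p d \<alpha> M (\<lambda>j. t * x j) = (\<lambda>j. t * M_alpha p d \<alpha> M x j)"
proof
  fix i
  show "M_alpha p d \<alpha> M (\<lambda>j. t * x j) i = t * M_alpha p d \<alpha> M x i"
  proof (cases "i < p")
    case True
    have h: "pos_homogeneous (d i) (M i)" using assms(2) True by auto
    have e: "(\<lambda>j. if j < d i then t * x (\<alpha> i j) else 0) = (\<lambda>j. t * (if j < d i then x (\<alpha> i j) else 0))"
      by auto
    show ?thesis using h arg_cube[OF assms(1) assms(3) True] assms(4) True
      unfolding M_alpha_def pos_homogeneous_def e by auto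
  next
    case False then show ?thesis unfolding M_alpha_def by simp
  qed
qed

lemma iter_hom:
  assumes "admissible_alpha p d \<alpha>" "averaging_mapping {0<..} p d M"
    "\<forall>i<p. pos_homogeneous (d i) (M i)"
    "x \<in> cube {0<..} p" "(t::real) > 0"
  shows "((M_alpha p d \<alpha> M) ^^ n) (\<lambda>j. t * x j) = (\<lambda>j. t * ((M_alpha p d \<alpha> M) ^^ n) x j)"
proof (induction n)
  case 0 then show ?case by simp
next
  case (Suc n)
  show ?case using Ma_hom[OF assms(1,3) iter_cube[OF assms(1,2,4)] assms(5), of n] Suc by simp
qed

theorem corollary3p2:
  fixes I :: "real set" and p :: nat and d :: "nat \<Rightarrow> nat"
    and \<alpha> :: "nat \<Rightarrow> nat \<Rightarrow> nat"
    and M :: "nat \<Rightarrow> (nat \<Rightarrow> real) \<Rightarrow> real"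
    and K :: "(nat \<Rightarrow> real) \<Rightarrow> real"
  assumes I: "is_interval I"
    and p: "p \<ge> 1"
    and d: "\<forall>i<p. d i \<ge> 1"
    and alpha: "admissible_alpha p d \<alpha>"
    and avg: "averaging_mapping I p d M"
    and erg: "root_graph_ergodic {..<p} (incidence_edges p d \<alpha>)"
    and cont: "\<forall>i<p. continuous_on (cube I (d i)) (M i)"
    and strict: "\<forall>i<p. strict_mean I (d i) (M i)"
    and K: "\<forall>x\<in>cube I p. \<forall>i<p.
              (\<lambda>n. ((M_alpha p d \<alpha> M) ^^ n) x i) \<longlonglongrightarrow> K x"
  shows "(\<forall>x\<in>cube I p. K (M_alpha p d \<alpha> M x) = K x)
    \<and> ((\<forall>i<p. nondecreasing_mean I (d i) (M i)) \<longrightarrow> nondecreasing_mean I p K)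
    \<and> ((I = {0<..} \<and> (\<forall>i<p. pos_homogeneous (d i) (M i))) \<longrightarrow>
         (\<forall>n. \<forall>x\<in>cube I p. \<forall>t>0. \<forall>i<p.
             ((M_alpha p d \<alpha> M) ^^ n) (\<lambda>j. t * x j) i = t * ((M_alpha p d \<alpha> M) ^^ n) x i)
         \<and> pos_homogeneous p K)"
  proof -
  have p0: "0 < p" using p by simp
  show ?thesis
proof (intro conjI impI)
  show "\<forall>x\<in>cube I p. K (M_alpha p d \<alpha> M x) = K x"
  proof
    fix x assume x: "x \<in> cube I p"
    have c: "M_alpha p d \<alpha> M x \<in> cube I p" using Ma_cube[OF alpha avg x] .
    have l1: "(\<lambda>n. ((M_alpha p d \<alpha> M) ^^ n) (M_alpha p d \<alpha> M x) 0) \<longlonglongrightarrow> K (M_alpha p d \<alpha> M x)"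
      using K c p0 by auto
    have "(\<lambda>n. ((M_alpha p d \<alpha> M) ^^ Suc n) x 0) \<longlonglongrightarrow> K x"
      using LIMSEQ_Suc[of "\<lambda>n. ((M_alpha p d \<alpha> M) ^^ n) x 0"] K x p0 by auto
    moreover have "\<And>n. ((M_alpha p d \<alpha> M) ^^ Suc n) x = ((M_alpha p d \<alpha> M) ^^ n) (M_alpha p d \<alpha> M x)"
      by (simp add: funpow_Suc_right del: funpow.simps)
    ultimately show "K (M_alpha p d \<alpha> M x) = K x" using l1 LIMSEQ_unique by auto
  qed
next
  assume nd: "\<forall>i<p. nondecreasing_mean I (d i) (M i)"
  show "nondecreasing_mean I p K"
    unfolding nondecreasing_mean_def
  proof (intro ballI impI)
    fix x y assume x: "x \<in> cube I p" and y: "y \<in> cube I p" and le: "\<forall>j<p. x j \<le> y j"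
    have "\<And>n. ((M_alpha p d \<alpha> M) ^^ n) x 0 \<le> ((M_alpha p d \<alpha> M) ^^ n) y 0"
      using iter_mono[OF alpha avg nd x y le] p0 by auto
    then show "K x \<le> K y" using K x y p0 LIMSEQ_le[of "\<lambda>n. ((M_alpha p d \<alpha> M) ^^ n) x 0" "K x" "\<lambda>n. ((M_alpha p d \<alpha> M) ^^ n) y 0" "K y"]
      by auto
  qed
next
  assume h: "I = {0<..} \<and> (\<forall>i<p. pos_homogeneous (d i) (M i))"
  then have I0: "I = {0<..}" and hom: "\<forall>i<p. pos_homogeneous (d i) (M i)" by auto
  have avg0: "averaging_mapping {0<..} p d M" using avg I0 by simp
  show "\<forall>n. \<forall>x\<in>cube I p. \<forall>t>0. \<forall>i<p.
             ((M_alpha p d \<alpha> M) ^^ n) (\<lambda>j. t * x j) i = t * ((M_alpha p d \<alpha> M) ^^ n) x i"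
    using iter_hom[OF alpha avg0 hom] I0 by simp
  show "pos_homogeneous p K"
    unfolding pos_homogeneous_def
  proof (intro ballI allI impI)
    fix x and t :: real assume x: "x \<in> cube {0<..} p" and t: "t > 0"
    have tx: "(\<lambda>j. t * x j) \<in> cube I p" using scale_cube[OF x t] I0 by simp
    have l1: "(\<lambda>n. ((M_alpha p d \<alpha> M) ^^ n) (\<lambda>j. t * x j) 0) \<longlonglongrightarrow> K (\<lambda>j. t * x j)"
      using K tx p0 by auto
    have "(\<lambda>n. t * ((M_alpha p d \<alpha> M) ^^ n) x 0) \<longlonglongrightarrow> t * K x"
      using K x I0 p0 by (auto intro: tendsto_mult_left)
    moreover have "\<And>n. ((M_alpha p d \<alpha> M) ^^ n) (\<lambda>j. t * x j) 0 = t * ((M_alpha p d \<alpha> M) ^^ n) x 0"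
      using iter_hom[OF alpha avg0 hom x t] by simp
    ultimately show "K (\<lambda>j. t * x j) = t * K x" using l1 LIMSEQ_unique by auto
  qed
qed
qed

end
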